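(* Let $\mathcal{A}$ be a topological ring containing $\mathbb{Q}$ and let $(\mathcal{B}_n)_{n\in\mathbb{N}}$ be a countable inverse system of complete topological $\mathcal{A}$-algebras with continuous surjective transition homomorphisms $p_{m,n}\colon\mathcal{B}_m\to\mathcal{B}_n$ for $m\ge n\ge0$. Let $\mathcal{B}=\varprojlim_n\mathcal{B}_n$ with the inverse limit topology and let $p_n\colon\mathcal{B}\to\mathcal{B}_n$ be the canonical continuous projections. Let $\partial_n\colon\mathcal{B}_n\to\mathcal{B}_n$, $n\in\mathbb{N}$, be topologically integrable $\mathcal{A}$-derivations such that $\partial_n\circ p_{m,n}=p_{m,n}\circ\partial_m$ for all $m\ge n\ge0$. Then there exists a unique topologically integrable $\mathcal{A}$-derivation $\partial=\varprojlim_n\partial_n$ of $\mathcal{B}$ such that $\partial_n\circ p_n=p_n\circ\partial$ for every $n\in\mathbb{N}$.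
   Context: Conventions: topological rings are linearly topologized with a countable fundamental system of open ideals; homomorphisms are continuous; complete means the canonical map to $\varprojlim_{\mathfrak{a}}\mathcal{B}/\mathfrak{a}$ (open ideals, discrete quotients) is a topological isomorphism; a complete topological $\mathcal{A}$-algebra is a complete topological ring with a continuous homomorphism from $\mathcal{A}$. A continuous $\mathcal{A}$-derivation $\partial$ of $\mathcal{B}$ is a continuous $\mathcal{A}$-linear map $\mathcal{B}\to\mathcal{B}$ satisfying the Leibniz rule; it is topologically integrable if $(\partial^i)_{i\in\mathbb{N}}$ converges continuously to $0$: for every $b\in\mathcal{B}$ and every open ideal $\mathfrak{b}'$ there exist an open ideal $\mathfrak{b}$ and $n_0$ with $\partial^n(b+\mathfrak{b})\subseteq\mathfrak{b}'$ for all $n\ge n_0$. *)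

theory Defs
  imports "HOL-Algebra.Algebra" "HOL-Library.Countable_Set"
begin

text \<open>A linearly topologized (commutative) ring, given by its set T of open ideals:
  the open ideals form a filter base of ideals, every ideal containing an open ideal is
  open, and there is a countable fundamental system of open ideals.\<close>
definition lin_top_ring :: "('a, 'm) ring_scheme \<Rightarrow> 'a set set \<Rightarrow> bool" where
  "lin_top_ring R T \<longleftrightarrow> cring R \<and> (\<forall>a\<in>T. ideal a R) \<and> carrier R \<in> T
     \<and> (\<forall>a\<in>T. \<forall>b\<in>T. a \<inter> b \<in> T)
     \<and> (\<forall>a\<in>T. \<forall>I. ideal I R \<and> a \<subseteq> I \<longrightarrow> I \<in> T)
     \<and> (\<exists>C. countable C \<and> C \<subseteq> T \<and> (\<forall>a\<in>T. \<exists>c\<in>C. c \<subseteq> a))"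

text \<open>Completeness: the canonical map to the inverse limit of the discrete quotients R/a
  (a open) is bijective (it is then automatically a topological isomorphism).
  Injectivity: the open ideals intersect to 0. Surjectivity: every compatible family of
  cosets c a \<in> R/a has a common element.\<close>
definition complete_ring :: "('a, 'm) ring_scheme \<Rightarrow> 'a set set \<Rightarrow> bool" where
  "complete_ring R T \<longleftrightarrow> (\<Inter>T = {\<zero>\<^bsub>R\<^esub>})
     \<and> (\<forall>c. (\<forall>a\<in>T. c a \<in> a_rcosets\<^bsub>R\<^esub> a) \<and> (\<forall>a\<in>T. \<forall>b\<in>T. a \<subseteq> b \<longrightarrow> c a \<subseteq> c b)
           \<longrightarrow> (\<exists>x\<in>carrier R. \<forall>a\<in>T. x \<in> c a))"

text \<open>Continuity of an additive map between linearly topologized rings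
  (equivalently, continuity at 0).\<close>
definition cont_map :: "('a, 'm) ring_scheme \<Rightarrow> 'a set set \<Rightarrow> ('b, 'n) ring_scheme \<Rightarrow> 'b set set
     \<Rightarrow> ('a \<Rightarrow> 'b) \<Rightarrow> bool" where
  "cont_map R T S U f \<longleftrightarrow> f \<in> carrier R \<rightarrow> carrier S \<and> (\<forall>b\<in>U. \<exists>a\<in>T. f ` a \<subseteq> b)"

definition complete_top_algebra :: "('a, 'm) ring_scheme \<Rightarrow> 'a set set \<Rightarrow> ('b, 'n) ring_scheme
     \<Rightarrow> 'b set set \<Rightarrow> ('a \<Rightarrow> 'b) \<Rightarrow> bool" where
  "complete_top_algebra A TA B TB phi \<longleftrightarrow> lin_top_ring A TA \<and> lin_top_ring B TB
     \<and> complete_ring B TB \<and> phi \<in> ring_hom A B \<and> cont_map A TA B TB phi"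

definition cont_derivation :: "('a, 'm) ring_scheme \<Rightarrow> ('a \<Rightarrow> 'b) \<Rightarrow> ('b, 'n) ring_scheme
     \<Rightarrow> 'b set set \<Rightarrow> ('b \<Rightarrow> 'b) \<Rightarrow> bool" where
  "cont_derivation A phi B TB D \<longleftrightarrow> cont_map B TB B TB D
     \<and> (\<forall>x\<in>carrier B. \<forall>y\<in>carrier B. D (x \<oplus>\<^bsub>B\<^esub> y) = D x \<oplus>\<^bsub>B\<^esub> D y)
     \<and> (\<forall>a\<in>carrier A. \<forall>x\<in>carrier B. D (phi a \<otimes>\<^bsub>B\<^esub> x) = phi a \<otimes>\<^bsub>B\<^esub> D x)
     \<and> (\<forall>x\<in>carrier B. \<forall>y\<in>carrier B.
          D (x \<otimes>\<^bsub>B\<^esub> y) = (x \<otimes>\<^bsub>B\<^esub> D y) \<oplus>\<^bsub>B\<^esub> (D x \<otimes>\<^bsub>B\<^esub> y))"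

text \<open>Topological integrability: the powers of D converge continuously to 0.\<close>
definition top_integrable :: "('b, 'n) ring_scheme \<Rightarrow> 'b set set \<Rightarrow> ('b \<Rightarrow> 'b) \<Rightarrow> bool" where
  "top_integrable B TB D \<longleftrightarrow> (\<forall>b\<in>carrier B. \<forall>b'\<in>TB. \<exists>bb\<in>TB. \<exists>n0::nat. \<forall>n\<ge>n0.
      (D ^^ n) ` {b \<oplus>\<^bsub>B\<^esub> y | y. y \<in> bb} \<subseteq> b')"

definition inv_lim_ring :: "(nat \<Rightarrow> ('b, 'n) ring_scheme) \<Rightarrow> (nat \<Rightarrow> nat \<Rightarrow> 'b \<Rightarrow> 'b)
     \<Rightarrow> (nat \<Rightarrow> 'b) ring" where
  "inv_lim_ring Bs p = \<lparr> carrier = {x. (\<forall>n. x n \<in> carrier (Bs n))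
                                      \<and> (\<forall>m n. n \<le> m \<longrightarrow> p m n (x m) = x n)},
     monoid.mult = (\<lambda>x y n. x n \<otimes>\<^bsub>Bs n\<^esub> y n),
     one = (\<lambda>n. \<one>\<^bsub>Bs n\<^esub>),
     ring.zero = (\<lambda>n. \<zero>\<^bsub>Bs n\<^esub>),
     add = (\<lambda>x y n. x n \<oplus>\<^bsub>Bs n\<^esub> y n) \<rparr>"

text \<open>Open ideals of the inverse limit topology (subspace of the product topology):
  ideals containing a finite intersection of preimages p_n^{-1}(a), a open in Bs n.\<close>
definition inv_lim_top :: "(nat \<Rightarrow> ('b, 'n) ring_scheme) \<Rightarrow> (nat \<Rightarrow> nat \<Rightarrow> 'b \<Rightarrow> 'b)
     \<Rightarrow> (nat \<Rightarrow> 'b set set) \<Rightarrow> (nat \<Rightarrow> 'b) set set" where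
  "inv_lim_top Bs p T = {I. ideal I (inv_lim_ring Bs p) \<and>
     (\<exists>F. finite F \<and> (\<forall>(n, a)\<in>F. a \<in> T n) \<and>
        carrier (inv_lim_ring Bs p) \<inter> (\<Inter>(n, a)\<in>F. {x. x n \<in> a}) \<subseteq> I)}"

end

theory Submission imports Defs begin

lemma inv_lim_cring:
  assumes cr: "\<And>n. cring (Bs n)"
    and hom: "\<And>m n. n \<le> m \<Longrightarrow> p m n \<in> ring_hom (Bs m) (Bs n)"
  shows "cring (inv_lim_ring Bs p)"
proof -
  interpret Rn: cring "Bs n" for n by (rule cr)
  have hc: "ring_hom_cring (Bs m) (Bs n) (p m n)" if "n \<le> m" for m n
    using hom[OF that] cr by (simp add: ring_hom_cring.intro ring_hom_cring_axioms.intro)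
  show ?thesis
  proof (rule cringI)
    show "abelian_group (inv_lim_ring Bs p)"
    proof (rule abelian_groupI)
      fix x assume x: "x \<in> carrier (inv_lim_ring Bs p)"
      show "\<exists>y\<in>carrier (inv_lim_ring Bs p). y \<oplus>\<^bsub>inv_lim_ring Bs p\<^esub> x = \<zero>\<^bsub>inv_lim_ring Bs p\<^esub>"
        apply (rule bexI[of _ "\<lambda>n. \<ominus>\<^bsub>Bs n\<^esub> x n"])
        using x by (auto simp: inv_lim_ring_def ring_hom_cring.hom_a_inv[OF hc] Rn.l_neg)
    qed (auto simp: inv_lim_ring_def ring_hom_cring.hom_zero[OF hc] ring_hom_add[OF hom] 
                  Rn.a_ac)
  next
    show "comm_monoid (inv_lim_ring Bs p)"
      by (rule comm_monoidI) (auto simp: inv_lim_ring_def ring_hom_one[OF hom] ring_hom_mult[OF hom] 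
                  Rn.m_ac)
  qed (auto simp: inv_lim_ring_def Rn.l_distr)
qed

lemma inv_lim_minus:
  assumes cr: "\<And>n. cring (Bs n)"
    and hom: "\<And>m n. n \<le> m \<Longrightarrow> p m n \<in> ring_hom (Bs m) (Bs n)"
    and x: "x \<in> carrier (inv_lim_ring Bs p)"
  shows "\<ominus>\<^bsub>inv_lim_ring Bs p\<^esub> x = (\<lambda>n. \<ominus>\<^bsub>Bs n\<^esub> x n)"
proof -
  interpret Rn: cring "Bs n" for n by (rule cr)
  interpret R: cring "inv_lim_ring Bs p" by (rule inv_lim_cring[OF cr hom])
  have hc: "ring_hom_cring (Bs m) (Bs n) (p m n)" if "n \<le> m" for m n
    using hom[OF that] cr by (simp add: ring_hom_cring.intro ring_hom_cring_axioms.intro)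
  show ?thesis
    apply (rule R.minus_equality)
    using x by (auto simp: inv_lim_ring_def ring_hom_cring.hom_a_inv[OF hc] Rn.l_neg)
qed

lemma inv_lim_ideal:
  assumes cr: "\<And>n. cring (Bs n)"
    and hom: "\<And>m n. n \<le> m \<Longrightarrow> p m n \<in> ring_hom (Bs m) (Bs n)"
    and G: "\<forall>(n, a)\<in>G. ideal a (Bs n)"
  shows "ideal (carrier (inv_lim_ring Bs p) \<inter> (\<Inter>(n, a)\<in>G. {x. x n \<in> a})) (inv_lim_ring Bs p)"
proof -
  interpret Rn: cring "Bs n" for n by (rule cr)
  interpret R: cring "inv_lim_ring Bs p" by (rule inv_lim_cring[OF cr hom])
  have id: "ideal a (Bs n)" if "(n, a) \<in> G" for n a using G that by auto
  show ?thesis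
  proof (rule idealI)
    show "ring (inv_lim_ring Bs p)" by (rule R.ring_axioms)
    show "subgroup (carrier (inv_lim_ring Bs p) \<inter> (\<Inter>(n, a)\<in>G. {x. x n \<in> a})) (add_monoid (inv_lim_ring Bs p))"
    proof (rule R.add.subgroupI)
      fix x assume xx: "x \<in> carrier (inv_lim_ring Bs p) \<inter> (\<Inter>(n, a)\<in>G. {x. x n \<in> a})"
      show "\<ominus>\<^bsub>inv_lim_ring Bs p\<^esub> x \<in> carrier (inv_lim_ring Bs p) \<inter> (\<Inter>(n, a)\<in>G. {x. x n \<in> a})"
      proof -
        have e2: "\<ominus>\<^bsub>inv_lim_ring Bs p\<^esub> x = (\<lambda>n. \<ominus>\<^bsub>Bs n\<^esub> x n)"
          using xx by (intro inv_lim_minus[OF cr hom]) auto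
        have "\<ominus>\<^bsub>inv_lim_ring Bs p\<^esub> x \<in> carrier (inv_lim_ring Bs p)" using xx by auto
        then show ?thesis using xx id unfolding e2
          by (auto simp: additive_subgroup.a_inv_closed ideal.axioms(1))
      qed
    next
      fix x y assume xy: "x \<in> carrier (inv_lim_ring Bs p) \<inter> (\<Inter>(n, a)\<in>G. {x. x n \<in> a})"
        "y \<in> carrier (inv_lim_ring Bs p) \<inter> (\<Inter>(n, a)\<in>G. {x. x n \<in> a})"
      show "x \<oplus>\<^bsub>inv_lim_ring Bs p\<^esub> y \<in> carrier (inv_lim_ring Bs p) \<inter> (\<Inter>(n, a)\<in>G. {x. x n \<in> a})"
      proof -
        have "x \<oplus>\<^bsub>inv_lim_ring Bs p\<^esub> y \<in> carrier (inv_lim_ring Bs p)" using xy by auto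
        moreover have "(x \<oplus>\<^bsub>inv_lim_ring Bs p\<^esub> y) n \<in> a" if "(n, a) \<in> G" for n a
        proof -
          have "x n \<in> a" "y n \<in> a" using xy that by auto
          then show ?thesis
            by (simp add: inv_lim_ring_def additive_subgroup.a_closed[OF ideal.axioms(1)[OF id[OF that]]])
        qed
        ultimately show ?thesis by auto
      qed
    next
      show "carrier (inv_lim_ring Bs p) \<inter> (\<Inter>(n, a)\<in>G. {x. x n \<in> a}) \<noteq> {}"
        using R.zero_closed id
        by (auto simp: inv_lim_ring_def additive_subgroup.zero_closed ideal.axioms(1))
    qed auto
  next
    fix a x assume "a \<in> carrier (inv_lim_ring Bs p) \<inter> (\<Inter>(n, a)\<in>G. {x. x n \<in> a})"
      "x \<in> carrier (inv_lim_ring Bs p)"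
    then show "x \<otimes>\<^bsub>inv_lim_ring Bs p\<^esub> a \<in> carrier (inv_lim_ring Bs p) \<inter> (\<Inter>(n, a)\<in>G. {x. x n \<in> a})"
      using id R.m_closed by (auto simp: inv_lim_ring_def ideal.I_l_closed)
  next
    fix a x assume "a \<in> carrier (inv_lim_ring Bs p) \<inter> (\<Inter>(n, a)\<in>G. {x. x n \<in> a})"
      "x \<in> carrier (inv_lim_ring Bs p)"
    then show "a \<otimes>\<^bsub>inv_lim_ring Bs p\<^esub> x \<in> carrier (inv_lim_ring Bs p) \<inter> (\<Inter>(n, a)\<in>G. {x. x n \<in> a})"
      using id R.m_closed by (auto simp: inv_lim_ring_def ideal.I_r_closed)
  qed
qed

theorem proposition2p29:
  fixes A :: "('a, 'c) ring_scheme" and TA :: "'a set set"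
    and Bs :: "nat \<Rightarrow> ('b, 'd) ring_scheme" and T :: "nat \<Rightarrow> 'b set set"
    and phi :: "nat \<Rightarrow> 'a \<Rightarrow> 'b"
    and p :: "nat \<Rightarrow> nat \<Rightarrow> 'b \<Rightarrow> 'b"
    and d :: "nat \<Rightarrow> 'b \<Rightarrow> 'b"
  assumes A_top: "lin_top_ring A TA"
    and A_Q: "\<one>\<^bsub>A\<^esub> \<noteq> \<zero>\<^bsub>A\<^esub>" "\<And>k::nat. k > 0 \<Longrightarrow> add_pow A k \<one>\<^bsub>A\<^esub> \<in> Units A"
    and B_alg: "\<And>n. complete_top_algebra A TA (Bs n) (T n) (phi n)"
    and p_hom: "\<And>m n. n \<le> m \<Longrightarrow> p m n \<in> ring_hom (Bs m) (Bs n)"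
    and p_cont: "\<And>m n. n \<le> m \<Longrightarrow> cont_map (Bs m) (T m) (Bs n) (T n) (p m n)"
    and p_surj: "\<And>m n. n \<le> m \<Longrightarrow> p m n ` carrier (Bs m) = carrier (Bs n)"
    and p_alg: "\<And>m n a. n \<le> m \<Longrightarrow> a \<in> carrier A \<Longrightarrow> p m n (phi m a) = phi n a"
    and p_id: "\<And>n x. x \<in> carrier (Bs n) \<Longrightarrow> p n n x = x"
    and p_comp: "\<And>k m n x. n \<le> m \<Longrightarrow> m \<le> k \<Longrightarrow> x \<in> carrier (Bs k) \<Longrightarrow>
                   p m n (p k m x) = p k n x"
    and d_der: "\<And>n. cont_derivation A (phi n) (Bs n) (T n) (d n)"
    and d_int: "\<And>n. top_integrable (Bs n) (T n) (d n)"
    and d_comm: "\<And>m n x. n \<le> m \<Longrightarrow> x \<in> carrier (Bs m) \<Longrightarrow> d n (p m n x) = p m n (d m x)"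
  shows "\<exists>D. cont_derivation A (\<lambda>a n. phi n a) (inv_lim_ring Bs p) (inv_lim_top Bs p T) D
           \<and> top_integrable (inv_lim_ring Bs p) (inv_lim_top Bs p T) D
           \<and> (\<forall>n. \<forall>x\<in>carrier (inv_lim_ring Bs p). d n (x n) = D x n)
           \<and> (\<forall>D'. cont_derivation A (\<lambda>a n. phi n a) (inv_lim_ring Bs p) (inv_lim_top Bs p T) D'
                 \<and> top_integrable (inv_lim_ring Bs p) (inv_lim_top Bs p T) D'
                 \<and> (\<forall>n. \<forall>x\<in>carrier (inv_lim_ring Bs p). d n (x n) = D' x n)
                 \<longrightarrow> (\<forall>x\<in>carrier (inv_lim_ring Bs p). D' x = D x))"
proof -
  have cr: "\<And>n. cring (Bs n)" using B_alg by (simp add: complete_top_algebra_def lin_top_ring_def)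
  have Tid: "\<And>n a. a \<in> T n \<Longrightarrow> ideal a (Bs n)" using B_alg by (simp add: complete_top_algebra_def lin_top_ring_def)
  have dcar: "\<And>n x. x \<in> carrier (Bs n) \<Longrightarrow> d n x \<in> carrier (Bs n)"
    using d_der unfolding cont_derivation_def cont_map_def by (meson PiE)
  have dcont: "\<And>n b. b \<in> T n \<Longrightarrow> \<exists>a\<in>T n. d n ` a \<subseteq> b"
    using d_der by (simp add: cont_derivation_def cont_map_def)
  have dadd: "\<And>n x y. x \<in> carrier (Bs n) \<Longrightarrow> y \<in> carrier (Bs n) \<Longrightarrow> d n (x \<oplus>\<^bsub>Bs n\<^esub> y) = d n x \<oplus>\<^bsub>Bs n\<^esub> d n y"
    using d_der by (simp add: cont_derivation_def)
  have dphi: "\<And>n a x. a \<in> carrier A \<Longrightarrow> x \<in> carrier (Bs n) \<Longrightarrow> d n (phi n a \<otimes>\<^bsub>Bs n\<^esub> x) = phi n a \<otimes>\<^bsub>Bs n\<^esub> d n x"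
    using d_der by (simp add: cont_derivation_def)
  have dmul: "\<And>n x y. x \<in> carrier (Bs n) \<Longrightarrow> y \<in> carrier (Bs n) \<Longrightarrow>
      d n (x \<otimes>\<^bsub>Bs n\<^esub> y) = (x \<otimes>\<^bsub>Bs n\<^esub> d n y) \<oplus>\<^bsub>Bs n\<^esub> (d n x \<otimes>\<^bsub>Bs n\<^esub> y)"
    using d_der by (simp add: cont_derivation_def)
  define R where "R = inv_lim_ring Bs p"
  define D where "D = (\<lambda>(x::nat \<Rightarrow> 'b) n. d n (x n))"
  have carR: "\<And>x. x \<in> carrier R \<longleftrightarrow> (\<forall>n. x n \<in> carrier (Bs n)) \<and> (\<forall>m n. n \<le> m \<longrightarrow> p m n (x m) = x n)"
    by (simp add: R_def inv_lim_ring_def)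
  have Dcar: "\<And>x. x \<in> carrier R \<Longrightarrow> D x \<in> carrier R"
    unfolding carR D_def using dcar d_comm by metis
  have Dpow: "\<And>x. x \<in> carrier R \<Longrightarrow> (D ^^ k) x \<in> carrier R \<and> (\<forall>n. (D ^^ k) x n = (d n ^^ k) (x n))" for k
  proof (induction k)
    case 0 then show ?case by simp
  next
    case (Suc k)
    then have ih: "(D ^^ k) x \<in> carrier R" "\<forall>n. (D ^^ k) x n = (d n ^^ k) (x n)" by auto
    have "(D ^^ Suc k) x \<in> carrier R" using Dcar[OF ih(1)] by simp
    moreover have "\<forall>n. (D ^^ Suc k) x n = (d n ^^ Suc k) (x n)" using ih(2) by (simp add: D_def)
    ultimately show ?case by blast
  qed
  have opn: "carrier R \<inter> (\<Inter>(n, a)\<in>G. {x. x n \<in> a}) \<in> inv_lim_top Bs p T"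
    if "finite G" "\<forall>(n, a)\<in>G. a \<in> T n" for G
  proof -
    have "\<forall>(n, a)\<in>G. ideal a (Bs n)" using that(2) Tid by auto
    then have "ideal (carrier R \<inter> (\<Inter>(n, a)\<in>G. {x. x n \<in> a})) R"
      unfolding R_def using inv_lim_ideal[where Bs=Bs and p=p and G=G, OF cr p_hom] apply -
      by simp
    then show ?thesis unfolding inv_lim_top_def R_def[symmetric] mem_Collect_eq
      using that by blast
  qed
  have opnE: "\<exists>F. finite F \<and> (\<forall>(n, a)\<in>F. a \<in> T n) \<and> carrier R \<inter> (\<Inter>(n, a)\<in>F. {x. x n \<in> a}) \<subseteq> I"
    if "I \<in> inv_lim_top Bs p T" for I
    using that unfolding inv_lim_top_def R_def by blast
  have cd: "cont_derivation A (\<lambda>a n. phi n a) R (inv_lim_top Bs p T) D"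
    unfolding cont_derivation_def cont_map_def
  proof (intro conjI ballI)
    show "D \<in> carrier R \<rightarrow> carrier R" using Dcar by blast
  next
    fix I assume I: "I \<in> inv_lim_top Bs p T"
    obtain F where F: "finite F" "\<forall>(n, a)\<in>F. a \<in> T n"
      "carrier R \<inter> (\<Inter>(n, a)\<in>F. {x. x n \<in> a}) \<subseteq> I" using opnE[OF I] by blast
    have "\<forall>f\<in>F. \<exists>a'\<in>T (fst f). d (fst f) ` a' \<subseteq> snd f" using F(2) dcont by auto
    then obtain g where g: "\<forall>f\<in>F. g f \<in> T (fst f) \<and> d (fst f) ` g f \<subseteq> snd f" by metis
    define G where "G = (\<lambda>f. (fst f, g f)) ` F"
    have "carrier R \<inter> (\<Inter>(n, a)\<in>G. {x. x n \<in> a}) \<in> inv_lim_top Bs p T"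
      apply (rule opn) using F(1) g by (auto simp: G_def)
    moreover have "D ` (carrier R \<inter> (\<Inter>(n, a)\<in>G. {x. x n \<in> a})) \<subseteq> I"
    proof
      fix z assume "z \<in> D ` (carrier R \<inter> (\<Inter>(n, a)\<in>G. {x. x n \<in> a}))"
      then obtain x where x: "x \<in> carrier R" "\<forall>(n, a)\<in>G. x n \<in> a" and z: "z = D x" by blast
      have "z \<in> carrier R" using z x Dcar by simp
      moreover have "z n \<in> a" if "(n, a) \<in> F" for n a
      proof -
        have "x n \<in> g (n, a)" using x(2) that by (force simp: G_def)
        then show ?thesis using g that z by (force simp: D_def)
      qed
      ultimately show "z \<in> I" using F(3) by blast
    qed
    ultimately show "\<exists>J\<in>inv_lim_top Bs p T. D ` J \<subseteq> I" by blast
  next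
    fix x y assume "x \<in> carrier R" "y \<in> carrier R"
    then show "D (x \<oplus>\<^bsub>R\<^esub> y) = D x \<oplus>\<^bsub>R\<^esub> D y"
      by (auto simp: carR D_def R_def inv_lim_ring_def dadd)
  next
    fix x y assume "x \<in> carrier R" "y \<in> carrier R"
    then show "D (x \<otimes>\<^bsub>R\<^esub> y) = (x \<otimes>\<^bsub>R\<^esub> D y) \<oplus>\<^bsub>R\<^esub> (D x \<otimes>\<^bsub>R\<^esub> y)"
      by (auto simp: carR D_def R_def inv_lim_ring_def dmul)
  next
    fix a x assume "a \<in> carrier A" "x \<in> carrier R"
    then show "D ((\<lambda>n. phi n a) \<otimes>\<^bsub>R\<^esub> x) = (\<lambda>n. phi n a) \<otimes>\<^bsub>R\<^esub> D x"
      by (auto simp: carR D_def R_def inv_lim_ring_def dphi)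
  qed
  have ti: "top_integrable R (inv_lim_top Bs p T) D"
    unfolding top_integrable_def
  proof (intro ballI)
    fix b I assume b: "b \<in> carrier R" and I: "I \<in> inv_lim_top Bs p T"
    obtain F where F: "finite F" "\<forall>(n, a)\<in>F. a \<in> T n"
      "carrier R \<inter> (\<Inter>(n, a)\<in>F. {x. x n \<in> a}) \<subseteq> I" using opnE[OF I] by blast
    have "\<forall>f\<in>F. \<exists>bb\<in>T (fst f). \<exists>n0. \<forall>k\<ge>n0. (d (fst f) ^^ k) ` {b (fst f) \<oplus>\<^bsub>Bs (fst f)\<^esub> y | y. y \<in> bb} \<subseteq> snd f"
    proof
      fix f assume "f \<in> F"
      then have "b (fst f) \<in> carrier (Bs (fst f))" "snd f \<in> T (fst f)" using b F(2) carR by auto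
      then show "\<exists>bb\<in>T (fst f). \<exists>n0. \<forall>k\<ge>n0. (d (fst f) ^^ k) ` {b (fst f) \<oplus>\<^bsub>Bs (fst f)\<^esub> y | y. y \<in> bb} \<subseteq> snd f"
        using d_int[of "fst f"] unfolding top_integrable_def by blast
    qed
    then have "\<exists>g. \<forall>f\<in>F. g f \<in> T (fst f) \<and> (\<exists>n0. \<forall>k\<ge>n0. (d (fst f) ^^ k) ` {b (fst f) \<oplus>\<^bsub>Bs (fst f)\<^esub> y | y. y \<in> g f} \<subseteq> snd f)"
      unfolding Bex_def by (rule bchoice)
    then obtain g where g1: "\<forall>f\<in>F. g f \<in> T (fst f) \<and> (\<exists>n0. \<forall>k\<ge>n0. (d (fst f) ^^ k) ` {b (fst f) \<oplus>\<^bsub>Bs (fst f)\<^esub> y | y. y \<in> g f} \<subseteq> snd f)"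
      by blast
    then have "\<forall>f\<in>F. \<exists>n0. \<forall>k\<ge>n0. (d (fst f) ^^ k) ` {b (fst f) \<oplus>\<^bsub>Bs (fst f)\<^esub> y | y. y \<in> g f} \<subseteq> snd f"
      by blast
    then have "\<exists>n0. \<forall>f\<in>F. \<forall>k\<ge>n0 f. (d (fst f) ^^ k) ` {b (fst f) \<oplus>\<^bsub>Bs (fst f)\<^esub> y | y. y \<in> g f} \<subseteq> snd f"
      by (rule bchoice)
    then obtain n0 where n0: "\<forall>f\<in>F. \<forall>k\<ge>n0 f. (d (fst f) ^^ k) ` {b (fst f) \<oplus>\<^bsub>Bs (fst f)\<^esub> y | y. y \<in> g f} \<subseteq> snd f"
      by blast
    have g: "\<forall>f\<in>F. g f \<in> T (fst f) \<and> (\<forall>k\<ge>n0 f. (d (fst f) ^^ k) ` {b (fst f) \<oplus>\<^bsub>Bs (fst f)\<^esub> y | y. y \<in> g f} \<subseteq> snd f)"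
      using g1 n0 by blast
    define G where "G = (\<lambda>f. (fst f, g f)) ` F"
    define N where "N = Max (insert 0 (n0 ` F))"
    have N: "f \<in> F \<Longrightarrow> n0 f \<le> N" for f using F(1) by (simp add: N_def)
    have "carrier R \<inter> (\<Inter>(n, a)\<in>G. {x. x n \<in> a}) \<in> inv_lim_top Bs p T"
      apply (rule opn) using F(1) g by (auto simp: G_def)
    moreover have "\<forall>k\<ge>N. (D ^^ k) ` {b \<oplus>\<^bsub>R\<^esub> y | y. y \<in> carrier R \<inter> (\<Inter>(n, a)\<in>G. {x. x n \<in> a})} \<subseteq> I"
    proof (intro allI impI subsetI)
      fix k z assume k: "N \<le> k" and "z \<in> (D ^^ k) ` {b \<oplus>\<^bsub>R\<^esub> y | y. y \<in> carrier R \<inter> (\<Inter>(n, a)\<in>G. {x. x n \<in> a})}"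
      then obtain y where y: "y \<in> carrier R" "\<forall>(n, a)\<in>G. y n \<in> a" and z: "z = (D ^^ k) (b \<oplus>\<^bsub>R\<^esub> y)" by blast
      have byc: "b \<oplus>\<^bsub>R\<^esub> y \<in> carrier R"
        using b y(1) cring.axioms(1)[OF inv_lim_cring[where Bs=Bs and p=p, OF cr p_hom]] ring.ring_simprules(1) unfolding R_def by metis
      have "z \<in> carrier R" using z Dpow[OF byc] by simp
      moreover have "z n \<in> a" if "(n, a) \<in> F" for n a
      proof -
        have yn: "y n \<in> g (n, a)" using y(2) that by (force simp: G_def)
        have zn: "z n = (d n ^^ k) (b n \<oplus>\<^bsub>Bs n\<^esub> y n)" using z Dpow[OF byc] by (simp add: R_def inv_lim_ring_def)
        have nk: "n0 (n, a) \<le> k" using N[OF that] k by simp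
        have gg: "\<forall>k\<ge>n0 (n, a). (d n ^^ k) ` {b n \<oplus>\<^bsub>Bs n\<^esub> y | y. y \<in> g (n, a)} \<subseteq> a"
          using conjunct2[OF bspec[OF g that]] by (simp only: fst_conv snd_conv)
        have mem: "(d n ^^ k) (b n \<oplus>\<^bsub>Bs n\<^esub> y n) \<in> (d n ^^ k) ` {b n \<oplus>\<^bsub>Bs n\<^esub> y | y. y \<in> g (n, a)}"
          using yn by (intro imageI) blast
        show ?thesis using subsetD[OF gg[rule_format, OF nk] mem] zn by simp
      qed
      ultimately show "z \<in> I" using F(3) by blast
    qed
    ultimately show "\<exists>bb\<in>inv_lim_top Bs p T. \<exists>n0. \<forall>n\<ge>n0. (D ^^ n) ` {b \<oplus>\<^bsub>R\<^esub> y | y. y \<in> bb} \<subseteq> I"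
      by blast
  qed
  show ?thesis
    unfolding R_def[symmetric]
  proof (intro exI[of _ D] conjI cd ti allI ballI impI)
    show "d n (x n) = D x n" for n x by (simp add: D_def)
  next
    fix D' x assume "cont_derivation A (\<lambda>a n. phi n a) R (inv_lim_top Bs p T) D' \<and>
         top_integrable R (inv_lim_top Bs p T) D' \<and> (\<forall>n. \<forall>x\<in>carrier R. d n (x n) = D' x n)"
      and "x \<in> carrier R"
    then show "D' x = D x" by (auto simp: D_def)
  qed
qed

end
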